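(* Let $k\geq p\geq 0$ and $n\geq 2k-p+2$ be integers, and let $G$ be an $(n+p+2)$-closed balanced bipartite graph of order $2n$. If $$e(G)>n(n-k+p-1)+(k+2)(k-p+1),$$ then $G$ contains a complete bipartite subgraph of order $2n-k+p$. Furthermore, if $\delta(G)\geq k$, then $K_{n,n-k+p}\subseteq G$, or $k=p+2$ and $G\in\{N_{n,n}^{p,1},N_{n,n}^{p,2}\}$.
   Context: A bipartite graph $G=(X,Y;E)$ is balanced if $|X|=|Y|$. For an integer $r$, $G$ is $r$-closed if $d_G(x)+d_G(y)<r$ for every non-adjacent pair $x\in X$, $y\in Y$. $e(G)$ is the number of edges, $\delta(G)$ the minimum degree; $K_{a,b}\subseteq G$ means $G$ has a subgraph isomorphic to the complete bipartite graph $K_{a,b}$; $G\in\{\dots\}$ means up to isomorphism. $N_{n,n}^{p,1}$: parts $X=X_1\cup X_2\cup X_3$, $Y=Y_1\cup Y_2\cup Y_3$, $|X_1|=|Y_1|=n-p-2$, $|X_2|=|Y_2|=p+1$, $|X_3|=|Y_3|=1$; edges are all pairs between $X_i$ and $Y_i$ ($i=1,2,3$), between $X_1$ and $Y_2$, between $X_2$ and $Y_1\cup Y_3$, and between $X_3$ and $Y_2$. $N_{n,n}^{p,2}$: parts $X=X_1\cup X_2\cup X_3$, $Y=Y_1\cup Y_2\cup Y_3$, $|X_1|=|Y_1|=n-p-3$, $|X_2|=|Y_2|=p+2$, $|X_3|=|Y_3|=1$; edges are all pairs between $X_1$ and $Y_1$, between $X_2$ and $Y_2$, between $X_1$ and $Y_2$,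 between $X_2$ and $Y_1\cup Y_3$, and between $X_3$ and $Y_2$ (no edge between $X_3$ and $Y_3$). *)

theory Defs
  imports Main
begin

text \<open>A bipartite graph G = (X, Y; E) is given by two disjoint finite vertex sets X, Y
  and an edge set E \<subseteq> X \<times> Y (an edge {x,y} is stored as the pair (x,y) with x in X).\<close>

definition bip_graph :: "'a set \<Rightarrow> 'a set \<Rightarrow> ('a \<times> 'a) set \<Rightarrow> bool" where
  "bip_graph X Y E \<longleftrightarrow> finite X \<and> finite Y \<and> X \<inter> Y = {} \<and> E \<subseteq> X \<times> Y"

definition bip_adj :: "('a \<times> 'a) set \<Rightarrow> 'a \<Rightarrow> 'a \<Rightarrow> bool" where
  "bip_adj E u v \<longleftrightarrow> (u, v) \<in> E \<or> (v, u) \<in> E"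

definition bip_deg :: "'a set \<Rightarrow> 'a set \<Rightarrow> ('a \<times> 'a) set \<Rightarrow> 'a \<Rightarrow> nat" where
  "bip_deg X Y E v = card {w \<in> X \<union> Y. bip_adj E v w}"

definition r_closed :: "nat \<Rightarrow> 'a set \<Rightarrow> 'a set \<Rightarrow> ('a \<times> 'a) set \<Rightarrow> bool" where
  "r_closed r X Y E \<longleftrightarrow>
     (\<forall>x\<in>X. \<forall>y\<in>Y. (x, y) \<notin> E \<longrightarrow> bip_deg X Y E x + bip_deg X Y E y < r)"

definition min_deg_ge :: "nat \<Rightarrow> 'a set \<Rightarrow> 'a set \<Rightarrow> ('a \<times> 'a) set \<Rightarrow> bool" where
  "min_deg_ge k X Y E \<longleftrightarrow> (\<forall>v\<in>X \<union> Y. k \<le> bip_deg X Y E v)"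

definition has_K :: "nat \<Rightarrow> nat \<Rightarrow> 'a set \<Rightarrow> 'a set \<Rightarrow> ('a \<times> 'a) set \<Rightarrow> bool" where
  "has_K a b X Y E \<longleftrightarrow>
     (\<exists>S T. S \<subseteq> X \<and> T \<subseteq> Y \<and> card S = a \<and> card T = b \<and> S \<times> T \<subseteq> E)"

definition K_sub :: "nat \<Rightarrow> nat \<Rightarrow> 'a set \<Rightarrow> 'a set \<Rightarrow> ('a \<times> 'a) set \<Rightarrow> bool" where
  "K_sub a b X Y E \<longleftrightarrow> has_K a b X Y E \<or> has_K b a X Y E"

definition bip_iso ::
  "'a set \<Rightarrow> 'a set \<Rightarrow> ('a \<times> 'a) set \<Rightarrow> 'b set \<Rightarrow> 'b set \<Rightarrow> ('b \<times> 'b) set \<Rightarrow> bool" where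
  "bip_iso X Y E X' Y' E' \<longleftrightarrow>
     (\<exists>f. bij_betw f (X \<union> Y) (X' \<union> Y') \<and>
          (\<forall>u\<in>X \<union> Y. \<forall>v\<in>X \<union> Y. bip_adj E u v \<longleftrightarrow> bip_adj E' (f u) (f v)))"

text \<open>The graphs N^{p,1}_{n,n} and N^{p,2}_{n,n}: vertices (False,i) form X, (True,i) form Y,
  i < n. Index blocks: 1, 2, 3.\<close>
definition NX :: "nat \<Rightarrow> (bool \<times> nat) set" where
  "NX n = {(False, i) | i. i < n}"

definition NY :: "nat \<Rightarrow> (bool \<times> nat) set" where
  "NY n = {(True, i) | i. i < n}"

text \<open>N^{p,1}: |X_1| = n-p-2, |X_2| = p+1, |X_3| = 1.\<close>
definition blk1 :: "nat \<Rightarrow> nat \<Rightarrow> nat \<Rightarrow> nat" where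
  "blk1 n p i = (if i < n - p - 2 then 1 else if i < n - 1 then 2 else 3)"

definition N1E :: "nat \<Rightarrow> nat \<Rightarrow> ((bool \<times> nat) \<times> (bool \<times> nat)) set" where
  "N1E n p = {((False, i), (True, j)) | i j. i < n \<and> j < n \<and>
     (blk1 n p i, blk1 n p j) \<in> {(1,1), (2,2), (3,3), (1,2), (2,1), (2,3), (3,2)}}"

text \<open>N^{p,2}: |X_1| = n-p-3, |X_2| = p+2, |X_3| = 1; no edge between X_3 and Y_3.\<close>
definition blk2 :: "nat \<Rightarrow> nat \<Rightarrow> nat \<Rightarrow> nat" where
  "blk2 n p i = (if i < n - p - 3 then 1 else if i < n - 1 then 2 else 3)"

definition N2E :: "nat \<Rightarrow> nat \<Rightarrow> ((bool \<times> nat) \<times> (bool \<times> nat)) set" where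
  "N2E n p = {((False, i), (True, j)) | i j. i < n \<and> j < n \<and>
     (blk2 n p i, blk2 n p j) \<in> {(1,1), (2,2), (1,2), (2,1), (2,3), (3,2)}}"

end

theory Submission
  imports Defs
begin


definition dX :: "('a \<times> 'a) set \<Rightarrow> 'a \<Rightarrow> nat" where
  "dX M x = card {y. (x, y) \<in> M}"

definition is_cover :: "'a set \<Rightarrow> 'a set \<Rightarrow> ('a \<times> 'a) set \<Rightarrow> 'a set \<Rightarrow> 'a set \<Rightarrow> bool" where
  "is_cover X Y M CX CY \<longleftrightarrow> CX \<subseteq> X \<and> CY \<subseteq> Y \<and> (\<forall>x y. (x, y) \<in> M \<longrightarrow> x \<in> CX \<or> y \<in> CY)"

lemma card_M_sum:
  assumes "finite C" "finite Y" "M \<subseteq> C \<times> Y"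
  shows "card M = (\<Sum>x\<in>C. dX M x)"
proof -
  have "M = (SIGMA x:C. {y. (x, y) \<in> M})" using assms(3) by auto
  moreover have "\<forall>x\<in>C. finite {y. (x, y) \<in> M}"
    using assms by (auto intro: finite_subset[of _ Y])
  ultimately have "card M = card (SIGMA x:C. {y. (x, y) \<in> M})" by simp
  also have "\<dots> = (\<Sum>x\<in>C. card {y. (x, y) \<in> M})"
    using assms(1) \<open>\<forall>x\<in>C. finite {y. (x, y) \<in> M}\<close> by (rule card_SigmaI)
  finally show ?thesis by (simp add: dX_def)
qed

lemma card_M_part:
  assumes "finite C" "finite Y" "M \<subseteq> X \<times> Y"
  shows "card {p\<in>M. fst p \<in> C} = (\<Sum>x\<in>C. dX M x)"
proof -
  have "card {p\<in>M. fst p \<in> C} = (\<Sum>x\<in>C. dX {p\<in>M. fst p \<in> C} x)"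
    by (rule card_M_sum[OF assms(1,2)]) (use assms(3) in auto)
  also have "\<dots> = (\<Sum>x\<in>C. dX M x)"
    by (rule sum.cong) (auto simp: dX_def)
  finally show ?thesis .
qed

lemma dX_conv: "dX (converse M) y = card {x. (x, y) \<in> M}"
  by (simp add: dX_def)

lemma avg_sum:
  assumes "finite X" "finite Y" "M \<subseteq> X \<times> Y"
  shows "(\<Sum>a\<in>{0..<N}. card {x\<in>X. a < dX M x}) \<le> card M"
proof -
  have "(\<Sum>a\<in>{0..<N}. card {x\<in>X. a < dX M x}) = (\<Sum>a\<in>{0..<N}. \<Sum>x\<in>X. (if a < dX M x then 1 else 0::nat))"
    using assms(1) by (simp add: sum.If_cases Int_def)
  also have "\<dots> = (\<Sum>x\<in>X. \<Sum>a\<in>{0..<N}. (if a < dX M x then 1 else 0::nat))"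
    by (rule sum.swap)
  also have "\<dots> = (\<Sum>x\<in>X. card {a\<in>{0..<N}. a < dX M x})"
    by (simp add: sum.If_cases Int_def)
  also have "\<dots> \<le> (\<Sum>x\<in>X. dX M x)"
  proof (rule sum_mono)
    fix x assume "x \<in> X"
    have "{a\<in>{0..<N}. a < dX M x} \<subseteq> {0..<dX M x}" by auto
    then show "card {a\<in>{0..<N}. a < dX M x} \<le> dX M x"
      using card_mono[of "{0..<dX M x}"] by fastforce
  qed
  also have "\<dots> = card M" using card_M_sum[OF assms] by simp
  finally show ?thesis .
qed

lemma arith1:
  fixes N q m :: nat
  assumes "2*q+1 \<le> N" "m < (q+1)*(N-q-1)"
  shows "2*m < N*(N-q)"
proof -
  obtain t where t: "N = 2*q+1+t" using assms(1) le_Suc_ex by blast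
  have "N - q - 1 = q + t" "N - q = q+1+t" using t by auto
  then have "2*(q+1)*(N-q-1) \<le> N*(N-q)" using t by (simp add: algebra_simps)
  then show ?thesis using assms(2) by linarith
qed

lemma arith2:
  fixes N q m a b :: nat
  assumes "m < (q+1)*(N-q-1)" "a*(N-a) + b*(N-b) \<le> m + a*b"
    "a + b \<le> N - q - 1" "q + 1 \<le> a + b"
  shows False
proof -
  have hN: "int (N - a) = int N - int a" "int (N - b) = int N - int b"
    "int (N - q - 1) = int N - int q - 1" using assms(3,4) by auto
  have h1: "int a * (int N - int a) + int b * (int N - int b) \<le> int m + int a * int b"
    using assms(2) hN by (metis of_nat_add of_nat_le_iff of_nat_mult)
  have h2: "int m < (int q + 1) * (int N - int q - 1)"
    using assms(1) hN by (metis of_nat_1 of_nat_add of_nat_less_iff of_nat_mult)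
  have h3: "0 \<le> (int a + int b - int q - 1) * (int N - int q - 1 - int a - int b)"
    using assms(3,4) by (intro mult_nonneg_nonneg) auto
  have h4: "0 \<le> int a * int b" by simp
  show False using h1 h2 h3 h4 by (simp add: algebra_simps) 
qed


lemma cover_shrink:
  assumes "is_cover X Y M CX CY" "x \<in> CX" "\<forall>y. (x, y) \<in> M \<longrightarrow> y \<in> CY"
  shows "is_cover X Y M (CX - {x}) CY"
  using assms unfolding is_cover_def by blast

lemma small_cover:
  fixes X Y :: "'a set" and M :: "('a \<times> 'a) set" and N q :: nat
  assumes fin: "finite X" "finite Y" and MXY: "M \<subseteq> X \<times> Y"
    and closed: "\<forall>x y. (x, y) \<in> M \<longrightarrow> N \<le> dX M x + dX (converse M) y"
    and Nq: "2*q+1 \<le> N" and mbound: "card M < (q+1)*(N-q-1)"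
  shows "\<exists>CX CY. is_cover X Y M CX CY \<and> card CX + card CY \<le> q
     \<and> (\<forall>x\<in>CX. N \<le> dX M x + card CX) \<and> (\<forall>y\<in>CY. N \<le> dX (converse M) y + card CY)"
proof -
  define A where "A a = card {x\<in>X. a < dX M x}" for a
  define B where "B b = card {y\<in>Y. b < dX (converse M) y}" for b
  have MYX: "converse M \<subseteq> Y \<times> X" using MXY by auto
  have sA: "(\<Sum>a\<in>{0..<N}. A a) \<le> card M" unfolding A_def by (rule avg_sum[OF fin MXY])
  have sB: "(\<Sum>a\<in>{0..<N}. B a) \<le> card M" unfolding B_def
    using avg_sum[OF fin(2,1) MYX] by simp
  have sB': "(\<Sum>a\<in>{0..<N}. B (N - 1 - a)) = (\<Sum>a\<in>{0..<N}. B a)"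
    using sum.atLeastLessThan_rev[of B 0 N] by simp
  have "\<exists>a\<in>{0..<N}. A a + B (N - 1 - a) < N - q"
  proof (rule ccontr)
    assume "\<not> ?thesis"
    then have "\<forall>a\<in>{0..<N}. N - q \<le> A a + B (N - 1 - a)" by auto
    then have "(\<Sum>a\<in>{0..<N}. N - q) \<le> (\<Sum>a\<in>{0..<N}. A a + B (N - 1 - a))"
      by (intro sum_mono) blast
    also have "\<dots> = (\<Sum>a\<in>{0..<N}. A a) + (\<Sum>a\<in>{0..<N}. B a)"
      using sB' by (simp add: sum.distrib)
    finally have "N * (N - q) \<le> 2 * card M" using sA sB by simp
    then show False using arith1[OF Nq mbound] by simp
  qed
  then obtain a0 where a0: "a0 < N" "A a0 + B (N - 1 - a0) < N - q" by auto
  have cov0: "is_cover X Y M {x\<in>X. a0 < dX M x} {y\<in>Y. N - 1 - a0 < dX (converse M) y}"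
    unfolding is_cover_def
  proof (intro conjI allI impI)
    fix x y assume xy: "(x, y) \<in> M"
    then have "N \<le> dX M x + dX (converse M) y" using closed by auto
    then show "x \<in> {x\<in>X. a0 < dX M x} \<or> y \<in> {y\<in>Y. N - 1 - a0 < dX (converse M) y}"
      using xy MXY a0(1) by auto
  qed auto
  define P where "P s \<longleftrightarrow> (\<exists>CX CY. is_cover X Y M CX CY \<and> card CX + card CY = s)" for s
  have P0: "P (A a0 + B (N - 1 - a0))" unfolding P_def A_def B_def using cov0 by blast
  define s0 where "s0 = (LEAST s. P s)"
  have "P s0" unfolding s0_def using P0 by (rule LeastI)
  then obtain CX CY where cov: "is_cover X Y M CX CY" and sz: "card CX + card CY = s0"
    unfolding P_def by blast
  have s0le: "s0 \<le> A a0 + B (N - 1 - a0)" unfolding s0_def using P0 by (rule Least_le)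
  have minimal: "\<And>CX' CY'. is_cover X Y M CX' CY' \<Longrightarrow> s0 \<le> card CX' + card CY'"
    unfolding s0_def P_def by (rule Least_le) blast
  have finC: "finite CX" "finite CY" using cov fin unfolding is_cover_def
    by (auto intro: finite_subset)
  have privX: "\<exists>y. (x, y) \<in> M \<and> y \<notin> CY" if "x \<in> CX" for x
  proof (rule ccontr)
    assume "\<not> ?thesis"
    then have "is_cover X Y M (CX - {x}) CY" using cover_shrink[OF cov that] by blast
    then have "s0 \<le> card (CX - {x}) + card CY" by (rule minimal)
    moreover have "card (CX - {x}) < card CX" using finC that by (meson card_Diff1_less)
    ultimately show False using sz by linarith
  qed
  have covc: "is_cover Y X (converse M) CY CX" using cov unfolding is_cover_def by blast
  have privY: "\<exists>x. (y, x) \<in> converse M \<and> x \<notin> CX" if "y \<in> CY" for y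
  proof (rule ccontr)
    assume "\<not> ?thesis"
    then have "is_cover Y X (converse M) (CY - {y}) CX" using cover_shrink[OF covc that] by blast
    then have "is_cover X Y M CX (CY - {y})" unfolding is_cover_def by blast
    then have "s0 \<le> card CX + card (CY - {y})" by (rule minimal)
    moreover have "card (CY - {y}) < card CY" using finC that by (meson card_Diff1_less)
    ultimately show False using sz by linarith
  qed
  have degX: "N \<le> dX M x + card CX" if xC: "x \<in> CX" for x
  proof -
    obtain y where y: "(x, y) \<in> M" "y \<notin> CY" using privX[OF xC] by blast
    have "{x'. (x', y) \<in> M} \<subseteq> CX" using cov y(2) unfolding is_cover_def by blast
    then have "dX (converse M) y \<le> card CX" unfolding dX_def using finC
      by (simp add: card_mono)
    then show ?thesis using closed y(1) by fastforce
  qed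
  have degY: "N \<le> dX (converse M) y + card CY" if yC: "y \<in> CY" for y
  proof -
    obtain x where x: "(y, x) \<in> converse M" "x \<notin> CX" using privY[OF yC] by blast
    have "{y'. (x, y') \<in> M} \<subseteq> CY" using cov x(2) unfolding is_cover_def by blast
    then have "dX M x \<le> card CY" unfolding dX_def using finC
      by (simp add: card_mono)
    then show ?thesis using closed x(1) by fastforce
  qed
  have s0small: "s0 \<le> N - q - 1" using s0le a0 by linarith
  have "card CX + card CY \<le> q"
  proof (rule ccontr)
    assume nq: "\<not> ?thesis"
    define a where "a = card CX"
    define b where "b = card CY"
    have SX: "card {p\<in>M. fst p \<in> CX} = (\<Sum>x\<in>CX. dX M x)"
      by (rule card_M_part[OF finC(1) fin(2) MXY])
    have SY0: "card {p\<in>converse M. fst p \<in> CY} = (\<Sum>y\<in>CY. dX (converse M) y)"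
      by (rule card_M_part[OF finC(2) fin(1) MYX])
    have "{p\<in>converse M. fst p \<in> CY} = converse {p\<in>M. snd p \<in> CY}" by auto
    then have SY: "card {p\<in>M. snd p \<in> CY} = (\<Sum>y\<in>CY. dX (converse M) y)"
      using SY0 by simp
    have lX: "a * (N - a) \<le> (\<Sum>x\<in>CX. dX M x)"
    proof -
      have "(\<Sum>x\<in>CX. N - a) \<le> (\<Sum>x\<in>CX. dX M x)"
        by (rule sum_mono) (use degX a_def in fastforce)
      then show ?thesis using a_def by simp
    qed
    have lY: "b * (N - b) \<le> (\<Sum>y\<in>CY. dX (converse M) y)"
    proof -
      have "(\<Sum>y\<in>CY. N - b) \<le> (\<Sum>y\<in>CY. dX (converse M) y)"
        by (rule sum_mono) (use degY b_def in fastforce)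
      then show ?thesis using b_def by simp
    qed
    have finM: "finite M" using MXY fin finite_subset by blast
    have "card {p\<in>M. fst p \<in> CX} + card {p\<in>M. snd p \<in> CY}
        = card ({p\<in>M. fst p \<in> CX} \<union> {p\<in>M. snd p \<in> CY}) + card ({p\<in>M. fst p \<in> CX} \<inter> {p\<in>M. snd p \<in> CY})"
      by (rule card_Un_Int) (use finM in auto)
    moreover have "card ({p\<in>M. fst p \<in> CX} \<union> {p\<in>M. snd p \<in> CY}) \<le> card M"
      by (rule card_mono[OF finM]) auto
    moreover have "card ({p\<in>M. fst p \<in> CX} \<inter> {p\<in>M. snd p \<in> CY}) \<le> card (CX \<times> CY)"
      by (rule card_mono) (use finC in auto)
    ultimately have "a * (N - a) + b * (N - b) \<le> card M + a * b"
      using SX SY lX lY a_def b_def by (simp add: card_cartesian_product)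
    then show False using arith2[OF mbound, of a b] sz s0small nq a_def b_def by linarith
  qed
  then show ?thesis using cov degX degY by blast
qed



lemma index_bij:
  assumes fin: "finite X" and cX: "card X = n" and x0: "x0 \<in> X" and A: "A \<subseteq> X - {x0}"
    and cA: "card A = c"
  obtains ix where "bij_betw ix X {0..<n}" "\<And>x. x \<in> X \<Longrightarrow> ix x = n - 1 \<longleftrightarrow> x = x0"
    "\<And>x. x \<in> X \<Longrightarrow> ix x < c \<longleftrightarrow> x \<in> A"
proof -
  have finA: "finite A" using A fin finite_subset by blast
  have cle: "c \<le> n - 1" using cA cX card_mono[OF _ A] fin x0 by (simp add: card_Diff_singleton)
  have n1: "1 \<le> n" using cX x0 fin card_0_eq by fastforce
  obtain gA where gA: "bij_betw gA A {0..<c}"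
    using finite_same_card_bij[OF finA, of "{0..<c}"] cA by auto
  define R where "R = X - {x0} - A"
  have finR: "finite R" using fin R_def by simp
  have cR: "card R = n - 1 - c" unfolding R_def using A cA cX x0 fin finA
    by (simp add: card_Diff_subset card_Diff_singleton)
  obtain gR where gR: "bij_betw gR R {c..<n-1}"
    using finite_same_card_bij[OF finR, of "{c..<n-1}"] cR by auto
  define ix where "ix x = (if x = x0 then n - 1 else if x \<in> A then gA x else gR x)" for x
  have b1: "bij_betw ix A {0..<c}"
    by (rule bij_betw_cong[THEN iffD1, OF _ gA]) (use A in \<open>auto simp: ix_def\<close>)
  have b2: "bij_betw ix R {c..<n-1}"
    by (rule bij_betw_cong[THEN iffD1, OF _ gR]) (auto simp: ix_def R_def)
  have b3: "bij_betw ix {x0} {n-1}" by (simp add: ix_def bij_betw_def)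
  have b12: "bij_betw ix (A \<union> R) ({0..<c} \<union> {c..<n-1})"
    by (rule bij_betw_combine[OF b1 b2]) auto
  have b123: "bij_betw ix ((A \<union> R) \<union> {x0}) (({0..<c} \<union> {c..<n-1}) \<union> {n-1})"
    by (rule bij_betw_combine[OF b12 b3]) (use cle in auto)
  have e1: "(A \<union> R) \<union> {x0} = X" using A x0 R_def by auto
  have e2: "({0..<c} \<union> {c..<n-1}) \<union> {n-1} = {0..<n}" using cle n1 by auto
  have bij: "bij_betw ix X {0..<n}" using b123 e1 e2 by simp
  have p2: "ix x = n - 1 \<longleftrightarrow> x = x0" if "x \<in> X" for x
  proof
    assume "ix x = n - 1"
    then show "x = x0" using bij_betw_inv_into_left[OF bij that] bij_betw_inv_into_left[OF bij x0]
      by (metis ix_def)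
  qed (simp add: ix_def)
  have p3: "ix x < c \<longleftrightarrow> x \<in> A" if "x \<in> X" for x
  proof
    assume "ix x < c"
    show "x \<in> A"
    proof (rule ccontr)
      assume "x \<notin> A"
      then have "x \<in> R \<union> {x0}" using that R_def by auto
      then have "ix x \<in> {c..<n-1} \<union> {n-1}" using b2 b3 bij_betw_apply by fastforce
      then show False using \<open>ix x < c\<close> cle by auto
    qed
  next
    assume "x \<in> A"
    then show "ix x < c" using b1 bij_betw_apply by fastforce
  qed
  show ?thesis using that bij p2 p3 by blast
qed


definition NE :: "nat \<Rightarrow> nat \<Rightarrow> bool \<Rightarrow> ((bool \<times> nat) \<times> (bool \<times> nat)) set" where
  "NE n c e = {((False, i), (True, j)) | i j. i < n \<and> j < n \<and>
     \<not> ((i = n - 1 \<and> j < c) \<or> (j = n - 1 \<and> i < c) \<or> (i = n - 1 \<and> j = n - 1 \<and> \<not> e))}"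

lemma iso_lemma:
  assumes bg: "bip_graph X Y E" and cX: "card X = n" and cY: "card Y = n"
    and x0: "x0 \<in> X" and y0: "y0 \<in> Y" and A: "A \<subseteq> X - {x0}" and B: "B \<subseteq> Y - {y0}"
    and cA: "card A = c" and cB: "card B = c"
    and hE: "\<forall>x\<in>X. \<forall>y\<in>Y. (x, y) \<in> E \<longleftrightarrow>
        \<not> ((x = x0 \<and> y \<in> B) \<or> (y = y0 \<and> x \<in> A) \<or> (x = x0 \<and> y = y0 \<and> \<not> e))"
  shows "bip_iso X Y E (NX n) (NY n) (NE n c e)"
proof -
  have finX: "finite X" and finY: "finite Y" and disj: "X \<inter> Y = {}" and EXY: "E \<subseteq> X \<times> Y"
    using bg by (auto simp: bip_graph_def)
  obtain ix where ix: "bij_betw ix X {0..<n}" "\<And>x. x \<in> X \<Longrightarrow> ix x = n - 1 \<longleftrightarrow> x = x0"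
    "\<And>x. x \<in> X \<Longrightarrow> ix x < c \<longleftrightarrow> x \<in> A"
    using index_bij[OF finX cX x0 A cA] by blast
  obtain iy where iy: "bij_betw iy Y {0..<n}" "\<And>y. y \<in> Y \<Longrightarrow> iy y = n - 1 \<longleftrightarrow> y = y0"
    "\<And>y. y \<in> Y \<Longrightarrow> iy y < c \<longleftrightarrow> y \<in> B"
    using index_bij[OF finY cY y0 B cB] by blast
  define f where "f v = (if v \<in> X then (False, ix v) else (True, iy v))" for v
  have pF: "bij_betw (Pair b) {0..<n} (Pair b ` {0..<n})" for b :: bool
    by (rule inj_on_imp_bij_betw) (simp add: inj_on_def)
  have NX: "NX n = Pair False ` {0..<n}" by (auto simp: NX_def)
  have NY: "NY n = Pair True ` {0..<n}" by (auto simp: NY_def)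
  have bX: "bij_betw f X (NX n)"
    unfolding NX by (rule bij_betw_cong[THEN iffD1, OF _ bij_betw_trans[OF ix(1) pF]]) (simp add: f_def)
  have bY: "bij_betw f Y (NY n)"
    unfolding NY by (rule bij_betw_cong[THEN iffD1, OF _ bij_betw_trans[OF iy(1) pF]])
      (use disj in \<open>auto simp: f_def\<close>)
  have bij: "bij_betw f (X \<union> Y) (NX n \<union> NY n)"
    by (rule bij_betw_combine[OF bX bY]) (auto simp: NX_def NY_def)
  have ixn: "ix x < n" if "x \<in> X" for x using ix(1) that bij_betw_apply by fastforce
  have iyn: "iy y < n" if "y \<in> Y" for y using iy(1) that bij_betw_apply by fastforce
  have adj: "bip_adj E u v \<longleftrightarrow> bip_adj (NE n c e) (f u) (f v)" if u: "u \<in> X \<union> Y" and v: "v \<in> X \<union> Y" for u v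
  proof -
    have key: "(x, y) \<in> E \<longleftrightarrow> ((False, ix x), (True, iy y)) \<in> NE n c e" if "x \<in> X" "y \<in> Y" for x y
      using hE that ix(2,3)[OF that(1)] iy(2,3)[OF that(2)] ixn[OF that(1)] iyn[OF that(2)]
      by (auto simp: NE_def)
    show ?thesis
    proof (cases "u \<in> X")
      case True
      then have uY: "u \<notin> Y" using disj by auto
      show ?thesis
      proof (cases "v \<in> X")
        case True
        then show ?thesis using \<open>u \<in> X\<close> EXY disj by (auto simp: bip_adj_def f_def NE_def)
      next
        case False
        then have "v \<in> Y" using v by auto
        then show ?thesis using \<open>u \<in> X\<close> False key[of u v] EXY uY
          by (auto simp: bip_adj_def f_def NE_def)
      qed
    next
      case False
      then have uY: "u \<in> Y" using u by auto
      show ?thesis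
      proof (cases "v \<in> X")
        case True
        then show ?thesis using uY False key[of v u] EXY
          by (auto simp: bip_adj_def f_def NE_def)
      next
        case False
        then show ?thesis using \<open>u \<notin> X\<close> EXY by (auto simp: bip_adj_def f_def NE_def)
      qed
    qed
  qed
  show ?thesis unfolding bip_iso_def using bij adj by blast
qed



lemma blk1_cond:
  assumes "i < n" "j < n" "p + 4 \<le> n"
  shows "(blk1 n p i, blk1 n p j) \<in> {(1,1), (2,2), (3,3), (1,2), (2,1), (2,3), (3,2)} \<longleftrightarrow>
     \<not> ((i = n - 1 \<and> j < n - p - 2) \<or> (j = n - 1 \<and> i < n - p - 2) \<or> (i = n - 1 \<and> j = n - 1 \<and> \<not> True))"
  proof -
  consider "i < n - p - 2" | "\<not> i < n - p - 2" "i < n - 1" | "i = n - 1" using assms by linarith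
  then show ?thesis
  proof cases
    case 1
    then show ?thesis using assms by (cases "j < n - p - 2"; cases "j < n - 1") (auto simp: blk1_def)
  next
    case 2
    then show ?thesis using assms by (cases "j < n - p - 2"; cases "j < n - 1") (auto simp: blk1_def)
  next
    case 3
    then show ?thesis using assms by (cases "j < n - p - 2"; cases "j < n - 1") (auto simp: blk1_def)
  qed
qed

lemma blk2_cond:
  assumes "i < n" "j < n" "p + 4 \<le> n"
  shows "(blk2 n p i, blk2 n p j) \<in> {(1,1), (2,2), (1,2), (2,1), (2,3), (3,2)} \<longleftrightarrow>
     \<not> ((i = n - 1 \<and> j < n - p - 3) \<or> (j = n - 1 \<and> i < n - p - 3) \<or> (i = n - 1 \<and> j = n - 1 \<and> \<not> False))"
  proof -
  consider "i < n - p - 3" | "\<not> i < n - p - 3" "i < n - 1" | "i = n - 1" using assms by linarith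
  then show ?thesis
  proof cases
    case 1
    then show ?thesis using assms by (cases "j < n - p - 3"; cases "j < n - 1") (auto simp: blk2_def)
  next
    case 2
    then show ?thesis using assms by (cases "j < n - p - 3"; cases "j < n - 1") (auto simp: blk2_def)
  next
    case 3
    then show ?thesis using assms by (cases "j < n - p - 3"; cases "j < n - 1") (auto simp: blk2_def)
  qed
qed

lemma N1E_eq:
  assumes "p + 4 \<le> n"
  shows "N1E n p = NE n (n - p - 2) True"
  unfolding N1E_def NE_def
  apply (intro Collect_cong ex_cong1 conj_cong refl)
  apply (erule (1) blk1_cond[OF _ _ assms])
  done

lemma N2E_eq:
  assumes "p + 4 \<le> n"
  shows "N2E n p = NE n (n - p - 3) False"
  unfolding N2E_def NE_def
  apply (intro Collect_cong ex_cong1 conj_cong refl)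
  apply (erule (1) blk2_cond[OF _ _ assms])
  done



lemma card_split: "finite Y \<Longrightarrow> card {y\<in>Y. P y} + card {y\<in>Y. \<not> P y} = card Y"
proof -
  assume f: "finite Y"
  have "card ({y\<in>Y. P y} \<union> {y\<in>Y. \<not> P y}) = card {y\<in>Y. P y} + card {y\<in>Y. \<not> P y}"
    by (rule card_Un_disjoint) (use f in auto)
  moreover have "{y\<in>Y. P y} \<union> {y\<in>Y. \<not> P y} = Y" by auto
  ultimately show ?thesis by simp
qed

lemma cover_complete:
  assumes "is_cover X Y (X \<times> Y - E) CX CY" "S \<subseteq> X - CX" "T \<subseteq> Y - CY"
  shows "S \<times> T \<subseteq> E"
  using assms unfolding is_cover_def by blast

theorem lemma3p1:
  fixes X Y :: "'a set" and E :: "('a \<times> 'a) set" and n k p :: nat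
  assumes "p \<le> k"
    and "n \<ge> 2 * k - p + 2"
    and "bip_graph X Y E"
    and "card X = n" and "card Y = n"
    and "r_closed (n + p + 2) X Y E"
    and "int (card E) > int n * (int n - int k + int p - 1) + (int k + 2) * (int k - int p + 1)"
  shows "(\<exists>a b. a \<ge> 1 \<and> b \<ge> 1 \<and> a + b = 2 * n - k + p \<and> has_K a b X Y E)
    \<and> (min_deg_ge k X Y E \<longrightarrow>
         K_sub n (n - k + p) X Y E
         \<or> (k = p + 2 \<and> (bip_iso X Y E (NX n) (NY n) (N1E n p)
                          \<or> bip_iso X Y E (NX n) (NY n) (N2E n p))))"
proof -
  note pk = assms(1) and nk = assms(2) and bg = assms(3) and cX = assms(4) and cY = assms(5)
    and rc = assms(6) and eb = assms(7)
  have finX: "finite X" and finY: "finite Y" and disj: "X \<inter> Y = {}" and EXY: "E \<subseteq> X \<times> Y"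
    using bg by (auto simp: bip_graph_def)
  define M where "M = X \<times> Y - E"
  define q where "q = k - p"
  define N where "N = n - p - 1"
  have MXY: "M \<subseteq> X \<times> Y" unfolding M_def by auto
  have degXE: "bip_deg X Y E x = card {y\<in>Y. (x, y) \<in> E}" if "x \<in> X" for x
    unfolding bip_deg_def bip_adj_def
    by (rule arg_cong[where f=card]) (use that EXY disj in auto)
  have degYE: "bip_deg X Y E y = card {x\<in>X. (x, y) \<in> E}" if "y \<in> Y" for y
    unfolding bip_deg_def bip_adj_def
    by (rule arg_cong[where f=card]) (use that EXY disj in auto)
  have dXM: "dX M x = card {y\<in>Y. (x, y) \<notin> E}" if "x \<in> X" for x
    unfolding dX_def M_def by (rule arg_cong[where f=card]) (use that in auto)
  have dYM: "dX (converse M) y = card {x\<in>X. (x, y) \<notin> E}" if "y \<in> Y" for y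
    unfolding dX_def M_def by (rule arg_cong[where f=card]) (use that in auto)
  have sumX: "bip_deg X Y E x + dX M x = n" if "x \<in> X" for x
    using degXE[OF that] dXM[OF that] card_split[OF finY] cY by simp
  have sumY: "bip_deg X Y E y + dX (converse M) y = n" if "y \<in> Y" for y
    using degYE[OF that] dYM[OF that] card_split[OF finX] cX by simp
  have closed: "\<forall>x y. (x, y) \<in> M \<longrightarrow> N \<le> dX M x + dX (converse M) y"
  proof (intro allI impI)
    fix x y assume xy: "(x, y) \<in> M"
    then have x: "x \<in> X" and y: "y \<in> Y" and nE: "(x, y) \<notin> E" unfolding M_def by auto
    have "bip_deg X Y E x + bip_deg X Y E y < n + p + 2"
      using rc x y nE unfolding r_closed_def by blast
    then show "N \<le> dX M x + dX (converse M) y" using sumX[OF x] sumY[OF y] N_def by linarith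
  qed
  have finM: "finite M" using MXY finX finY finite_subset by blast
  have cardM: "card M + card E = n * n"
  proof -
    have "card M + card E = card (X \<times> Y)" unfolding M_def
      using EXY finX finY by (metis card_Diff_subset card_mono finite_SigmaI le_add_diff_inverse2 finite_subset)
    then show ?thesis using cX cY by (simp add: card_cartesian_product)
  qed
  have nk2: "k + 2 \<le> n" "p + 2 \<le> n" "q + 2 \<le> n" using nk pk q_def by auto
  have Nq: "2 * q + 1 \<le> N" using nk pk q_def N_def by auto
  have mbound: "card M < (q + 1) * (N - q - 1)"
  proof -
    have e1: "int (card E) = int n * int n - int (card M)" using cardM
      by (metis add_diff_cancel_left' of_nat_add of_nat_mult)
    have e2: "int (N - q - 1) = int n - int k - 2" using nk2 pk q_def N_def by auto
    have e3: "int k = int p + int q" using pk q_def by auto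
    have "int (card M) < (int q + 1) * (int n - int k - 2)"
      using eb e1 unfolding e3 by (simp add: algebra_simps)
    moreover have "int ((q + 1) * (N - q - 1)) = (int q + 1) * (int n - int k - 2)"
      using e2 by (metis of_nat_mult of_nat_add of_nat_1)
    ultimately have "int (card M) < int ((q + 1) * (N - q - 1))" by metis
    then show ?thesis by linarith
  qed
  obtain CX CY where cov: "is_cover X Y M CX CY" and csz: "card CX + card CY \<le> q"
    and dCX: "\<forall>x\<in>CX. N \<le> dX M x + card CX" and dCY: "\<forall>y\<in>CY. N \<le> dX (converse M) y + card CY"
    using small_cover[OF finX finY MXY closed Nq mbound] by blast
  have CXX: "CX \<subseteq> X" and CYY: "CY \<subseteq> Y" using cov unfolding is_cover_def by auto
  have finC: "finite CX" "finite CY" using CXX CYY finX finY finite_subset by auto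
  have cov': "is_cover X Y (X \<times> Y - E) CX CY" using cov M_def by simp
  have cXC: "card (X - CX) = n - card CX" using cX CXX finC by (simp add: card_Diff_subset)
  have cYC: "card (Y - CY) = n - card CY" using cY CYY finC by (simp add: card_Diff_subset)
  have eqq: "2 * n - k + p = (n - card CX) + (n - q + card CX)" "n - k + p = n - q"
    using nk2 pk q_def csz by auto
  have part1: "\<exists>a b. a \<ge> 1 \<and> b \<ge> 1 \<and> a + b = 2 * n - k + p \<and> has_K a b X Y E"
  proof -
    obtain T where T: "T \<subseteq> Y - CY" "card T = n - q + card CX"
    proof -
      have "n - q + card CX \<le> card (Y - CY)" using cYC csz nk2 by linarith
      then show ?thesis using obtain_subset_with_card_n[of "n - q + card CX" "Y - CY"] that by blast
    qed
    have "has_K (n - card CX) (n - q + card CX) X Y E"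
      unfolding has_K_def using cover_complete[OF cov' _ T(1), of "X - CX"] T cXC by blast
    moreover have "n - card CX \<ge> 1" "n - q + card CX \<ge> 1" using csz nk2 by auto
    ultimately show ?thesis using eqq by metis
  qed
  have part2: "K_sub n (n - k + p) X Y E
         \<or> (k = p + 2 \<and> (bip_iso X Y E (NX n) (NY n) (N1E n p)
                          \<or> bip_iso X Y E (NX n) (NY n) (N2E n p)))"
    if md: "min_deg_ge k X Y E"
  proof -
    have mdX: "dX M x \<le> n - k" if "x \<in> X" for x
    proof -
      have "k \<le> bip_deg X Y E x" using md that unfolding min_deg_ge_def by blast
      then show ?thesis using sumX[OF that] by linarith
    qed
    have mdY: "dX (converse M) y \<le> n - k" if "y \<in> Y" for y
    proof -
      have "k \<le> bip_deg X Y E y" using md that unfolding min_deg_ge_def by blast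
      then show ?thesis using sumY[OF that] by linarith
    qed
    show ?thesis
    proof (cases "CX = {}")
      case True
      obtain T where T: "T \<subseteq> Y - CY" "card T = n - q"
        proof -
          have "n - q \<le> card (Y - CY)" using cYC csz by linarith
          then show ?thesis using obtain_subset_with_card_n[of "n - q" "Y - CY"] that by blast
        qed
      have "has_K n (n - q) X Y E"
        unfolding has_K_def using cover_complete[OF cov' _ T(1), of X] T cX True by blast
      then show ?thesis unfolding K_sub_def using eqq by simp
    next
      case CXne: False
      show ?thesis
      proof (cases "CY = {}")
        case True
        obtain S where S: "S \<subseteq> X - CX" "card S = n - q"
          proof -
          have "n - q \<le> card (X - CX)" using cXC csz by linarith
          then show ?thesis using obtain_subset_with_card_n[of "n - q" "X - CX"] that by blast
        qed
        have "has_K (n - q) n X Y E"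
          unfolding has_K_def using cover_complete[OF cov' S(1), of Y] S cY True by blast
        then show ?thesis unfolding K_sub_def using eqq by simp
      next
        case CYne: False
        obtain x0 where x0: "x0 \<in> CX" using CXne by auto
        obtain y0 where y0: "y0 \<in> CY" using CYne by auto
        have a1: "card CX \<ge> 1" "card CY \<ge> 1" using CXne CYne finC by (auto simp: Suc_le_eq card_gt_0_iff)
        have ha: "N \<le> n - k + card CX" using dCX x0 mdX[of x0] CXX by fastforce
        have hb: "N \<le> n - k + card CY" using dCY y0 mdY[of y0] CYY by fastforce
        have q2: "q = 2" and ca: "card CX = 1" and cb: "card CY = 1"
          using ha hb csz a1 N_def q_def nk2 pk by auto
        have CX1: "CX = {x0}" using ca x0 finC by (metis card_1_singletonE singletonD)
        have CY1: "CY = {y0}" using cb y0 finC by (metis card_1_singletonE singletonD)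
        have x0X: "x0 \<in> X" and y0Y: "y0 \<in> Y" using x0 y0 CXX CYY by auto
        have kp: "k = p + 2" using q2 q_def pk by auto
        define Ny where "Ny = {y. (x0, y) \<in> M}"
        define Nx where "Nx = {x. (x, y0) \<in> M}"
        have cNy: "card Ny = n - p - 2"
          using dCX x0 mdX[OF x0X] ca kp N_def unfolding Ny_def dX_def by fastforce
        have cNx: "card Nx = n - p - 2"
          using dCY y0 mdY[OF y0Y] cb kp N_def unfolding Nx_def dX_def by fastforce
        have NyY: "Ny \<subseteq> Y" and NxX: "Nx \<subseteq> X" using MXY Ny_def Nx_def by auto
        have finN: "finite Ny" "finite Nx" using NyY NxX finX finY finite_subset by auto
        have hM: "(x, y) \<notin> E \<longleftrightarrow> (x = x0 \<and> y \<in> Ny) \<or> (y = y0 \<and> x \<in> Nx)"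
          if "x \<in> X" "y \<in> Y" for x y
          using cov that CX1 CY1 unfolding is_cover_def Ny_def Nx_def M_def by blast
        have np: "p + 4 \<le> n" using nk kp by auto
        show ?thesis
        proof (cases "(x0, y0) \<in> M")
          case False
          have A: "Nx \<subseteq> X - {x0}" using NxX False Nx_def by auto
          have B: "Ny \<subseteq> Y - {y0}" using NyY False Ny_def by auto
          have "bip_iso X Y E (NX n) (NY n) (NE n (n - p - 2) True)"
            by (rule iso_lemma[OF bg cX cY x0X y0Y A B cNx cNy]) (use hM in blast)
          then show ?thesis using N1E_eq[OF np] kp by simp
        next
          case True
          have A: "Nx - {x0} \<subseteq> X - {x0}" using NxX by auto
          have B: "Ny - {y0} \<subseteq> Y - {y0}" using NyY by auto
          have inN: "x0 \<in> Nx" "y0 \<in> Ny" using True Nx_def Ny_def by auto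
          have cA: "card (Nx - {x0}) = n - p - 3" using cNx inN finN by simp
          have cB: "card (Ny - {y0}) = n - p - 3" using cNy inN finN by simp
          have "bip_iso X Y E (NX n) (NY n) (NE n (n - p - 3) False)"
            by (rule iso_lemma[OF bg cX cY x0X y0Y A B cA cB]) (use hM inN in blast)
          then show ?thesis using N2E_eq[OF np] kp by simp
        qed
      qed
    qed
  qed
  show ?thesis using part1 part2 by blast
qed

end
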